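(* Let $n\ge4$ and let $\mathcal{U}\subseteq\mathbb{P}_2(n)$ be an equidistant linear code with constant distance $2$. If $|\mathcal{U}|=2^{n-1}$, then either $\mathcal{U}^{*}$ is a sunflower, or $n=4$ and $\mathcal{U}^{*}=\{Y\in\mathbb{G}_2(4,2): Y\subset T\}$ for some $T\in\mathbb{G}_2(4,3)$.
   Context: $\mathbb{P}_q(n)$ denotes the set of all subspaces of $\mathbb{F}_q^n$ and $\mathbb{G}_q(n,k)$ the set of $k$-dimensional subspaces. For subspaces $X,Y$ the subspace distance is $d_S(X,Y)=\dim X+\dim Y-2\dim(X\cap Y)$. A linear code in $\mathbb{P}_q(n)$ is a subset $\mathcal{U}\subseteq\mathbb{P}_q(n)$ with $\{0\}\in\mathcal{U}$ for which there exists a map $\boxplus:\mathcal{U}\times\mathcal{U}\to\mathcal{U}$ such that (i) $(\mathcal{U},\boxplus)$ is an abelian group; (ii) its identity element is $\{0\}$; (iii) $X\boxplus X=\{0\}$ for all $X\in\mathcal{U}$; (iv) $d_S(Y_1\boxplus X,Y_2\boxplus X)=d_S(Y_1,Y_2)$ for all $Y_1,Y_2,X\in\mathcal{U}$. Its nontrivial part is $\mathcal{U}^*=\mathcal{U}\setminus\{\{0\}\}$. It is equidistant with constant distance $r$ if $d_S(X,Y)=r$ for all distinct $X,Y\in\mathcal{U}$. A family $\mathbb{S}\subseteq\mathbb{G}_q(n,k)$ is a sunflower (with center $C\in\mathbb{G}_q(n,t)$) if $X\cap Y=C$ for all distinct $X,Y\in\mathbb{S}$. *)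

theory Defs
  imports Complex_Main "HOL-Library.Z2" "HOL-Library.Function_Algebras" "HOL-Algebra.Group"
begin

text \<open>The field F_2 is the type bit. Vectors of F_2^n are functions nat => bit
  vanishing outside {0..<n}; scalar multiplication is pointwise.\<close>

definition scaleF2 :: "bit \<Rightarrow> (nat \<Rightarrow> bit) \<Rightarrow> (nat \<Rightarrow> bit)" where
  "scaleF2 c v = (\<lambda>i. c * v i)"

definition F2n :: "nat \<Rightarrow> (nat \<Rightarrow> bit) set" where
  "F2n n = {v. \<forall>i\<ge>n. v i = 0}"

definition P2 :: "nat \<Rightarrow> (nat \<Rightarrow> bit) set set" where
  "P2 n = {X. module.subspace scaleF2 X \<and> X \<subseteq> F2n n}"

definition dimF2 :: "(nat \<Rightarrow> bit) set \<Rightarrow> nat" where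
  "dimF2 X = vector_space.dim scaleF2 X"

definition G2 :: "nat \<Rightarrow> nat \<Rightarrow> (nat \<Rightarrow> bit) set set" where
  "G2 n k = {X \<in> P2 n. dimF2 X = k}"

definition dS :: "(nat \<Rightarrow> bit) set \<Rightarrow> (nat \<Rightarrow> bit) set \<Rightarrow> nat" where
  "dS X Y = dimF2 X + dimF2 Y - 2 * dimF2 (X \<inter> Y)"

definition linear_code :: "nat \<Rightarrow> (nat \<Rightarrow> bit) set set \<Rightarrow> bool" where
  "linear_code n U \<longleftrightarrow> U \<subseteq> P2 n \<and> {0} \<in> U \<and>
     (\<exists>f. comm_group \<lparr>carrier = U, monoid.mult = f, one = {0}\<rparr> \<and>
          (\<forall>X\<in>U. f X X = {0}) \<and>
          (\<forall>Y1\<in>U. \<forall>Y2\<in>U. \<forall>X\<in>U. dS (f Y1 X) (f Y2 X) = dS Y1 Y2))"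

definition equidistant :: "(nat \<Rightarrow> bit) set set \<Rightarrow> nat \<Rightarrow> bool" where
  "equidistant U r \<longleftrightarrow> (\<forall>X\<in>U. \<forall>Y\<in>U. X \<noteq> Y \<longrightarrow> dS X Y = r)"

definition sunflower :: "nat \<Rightarrow> (nat \<Rightarrow> bit) set set \<Rightarrow> bool" where
  "sunflower n S \<longleftrightarrow> (\<exists>k. S \<subseteq> G2 n k) \<and>
     (\<exists>t. \<exists>C\<in>G2 n t. \<forall>X\<in>S. \<forall>Y\<in>S. X \<noteq> Y \<longrightarrow> X \<inter> Y = C)"

end

theory Submission
  imports Defs
begin


interpretation F2: vector_space scaleF2
  by unfold_locales (auto simp: scaleF2_def fun_eq_iff algebra_simps)

lemma bit_cases2: "(x::bit) = 0 \<or> x = 1" by (cases x) auto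

lemma add_self_F2[simp]: "(x::nat\<Rightarrow>bit) + x = 0"
  by (auto simp: fun_eq_iff)

lemma add_eq0_F2: "(x::nat\<Rightarrow>bit) + y = 0 \<longleftrightarrow> x = y"
proof
  assume "x + y = 0"
  then have "x + y + y = y" by simp
  then show "x = y" by (simp add: add.assoc)
qed simp

lemma scale_cases: "scaleF2 c x = 0 \<or> scaleF2 c x = x"
  using bit_cases2[of c] by (auto simp: scaleF2_def fun_eq_iff)

lemma card_span_insert:
  assumes "finite (F2.span B)" "r \<notin> F2.span B"
  shows "card (F2.span (insert r B)) = 2 * card (F2.span B)"
proof -
  have eq: "F2.span (insert r B) = F2.span B \<union> (\<lambda>y. r + y) ` F2.span B"
  proof
    show "F2.span (insert r B) \<subseteq> F2.span B \<union> (\<lambda>y. r + y) ` F2.span B"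
    proof
      fix x assume "x \<in> F2.span (insert r B)"
      then obtain k where k: "x - scaleF2 k r \<in> F2.span B" unfolding F2.span_insert by auto
      show "x \<in> F2.span B \<union> (\<lambda>y. r + y) ` F2.span B"
      proof (cases "k = 0")
        case True then show ?thesis using k by simp
      next
        case False then have "k = 1" using bit_cases2 by auto
        then have "x - r \<in> F2.span B" using k F2.scale_one by simp
        moreover have "x = r + (x - r)" by simp
        ultimately show ?thesis by blast
      qed
    qed
    show "F2.span B \<union> (\<lambda>y. r + y) ` F2.span B \<subseteq> F2.span (insert r B)"
      using F2.span_mono[of B "insert r B"] F2.span_add F2.span_base[of r "insert r B"] by blast
  qed
  have disj: "F2.span B \<inter> (\<lambda>y. r + y) ` F2.span B = {}"
  proof (rule ccontr)
    assume "F2.span B \<inter> (\<lambda>y. r + y) ` F2.span B \<noteq> {}"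
    then obtain y where y: "y \<in> F2.span B" "r + y \<in> F2.span B" by auto
    then have "(r + y) + y \<in> F2.span B" using F2.span_add by blast
    then have "r \<in> F2.span B" by (simp add: add.assoc)
    then show False using assms by blast
  qed
  have "card ((\<lambda>y. r + y) ` F2.span B) = card (F2.span B)"
    by (rule card_image) (auto simp: inj_on_def)
  then show ?thesis using eq disj assms(1) by (simp add: card_Un_disjoint)
qed

lemma card_span_indep:
  "finite B \<Longrightarrow> F2.independent B \<Longrightarrow> card (F2.span B) = 2 ^ card B \<and> finite (F2.span B)"
proof (induction B rule: finite_induct)
  case empty then show ?case by simp
next
  case (insert b B)
  then have ind: "F2.independent B" "b \<notin> F2.span B"
    using F2.independent_insert[of b B] by auto
  with insert have IH: "card (F2.span B) = 2 ^ card B" "finite (F2.span B)" by auto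
  have "card (F2.span (insert b B)) = 2 * card (F2.span B)"
    using card_span_insert IH ind by blast
  moreover have "finite (F2.span (insert b B))"
  proof (rule card_ge_0_finite)
    have "0 \<in> F2.span B" by (simp add: F2.span_zero)
    then have "card (F2.span B) > 0" using IH(2) card_gt_0_iff by blast
    then show "card (F2.span (insert b B)) > 0" using \<open>card (F2.span (insert b B)) = 2 * card (F2.span B)\<close> by simp
  qed
  ultimately show ?case using insert IH by simp
qed
lemma card_subspace:
  assumes "F2.subspace X" "finite X"
  shows "card X = 2 ^ dimF2 X"
proof -
  obtain B where B: "B \<subseteq> X" "F2.independent B" "X \<subseteq> F2.span B" "card B = F2.dim X"
    using F2.basis_exists by blast
  have "F2.span B = X" using F2.span_subspace B assms by blast
  moreover have "finite B" using B(1) assms(2) finite_subset by blast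
  ultimately show ?thesis using card_span_indep[of B] B by (simp add: dimF2_def)
qed

lemma dim_from_card:
  assumes "F2.subspace X" "finite X" "card X = 2 ^ k"
  shows "dimF2 X = k"
  using card_subspace[OF assms(1,2)] assms(3) by simp



lemma F2n_finite: "finite (F2n n)"
proof -
  have "F2n n \<subseteq> (\<lambda>S i. if i \<in> S then 1 else 0) ` Pow {..<n}"
  proof
    fix v assume v: "v \<in> F2n n"
    have "v = (\<lambda>i. if i \<in> {i. i < n \<and> v i = 1} then 1 else 0)"
    proof
      fix i show "v i = (if i \<in> {i. i < n \<and> v i = 1} then 1 else 0)"
        using v bit_cases2[of "v i"] by (auto simp: F2n_def)
    qed
    then show "v \<in> (\<lambda>S i. if i \<in> S then 1 else 0) ` Pow {..<n}" by blast
  qed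
  then show ?thesis by (rule finite_subset) simp
qed

lemma F2n_subspace: "F2.subspace (F2n n)"
  by (auto simp: F2.subspace_def F2n_def scaleF2_def)

lemma P2_finite: "X \<in> P2 n \<Longrightarrow> finite X"
  unfolding P2_def using F2n_finite finite_subset by blast



lemma line_eq:
  assumes "F2.subspace X" "finite X" "card X = 4" "u \<in> X" "v \<in> X" "u \<noteq> v" "u \<noteq> 0" "v \<noteq> 0"
  shows "X = {0, u, v, u + v}"
proof -
  have sub: "{0, u, v, u + v} \<subseteq> X" using assms F2.subspace_0 F2.subspace_add by blast
  have "u + v \<noteq> 0" using assms by (simp add: add_eq0_F2)
  moreover have "u + v \<noteq> u" using assms(8) by simp
  moreover have "u + v \<noteq> v" using assms(7) by simp
  ultimately have "card {0, u, v, u + v} = 4" using assms by auto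
  then show ?thesis using card_subset_eq[OF assms(2) sub] assms(3) by simp
qed

lemma point_eq:
  assumes "F2.subspace X" "finite X" "card X = 2"
  obtains p where "p \<noteq> 0" "X = {0, p}"
proof -
  obtain a b where "a \<noteq> b" "X = {a, b}" using assms(3) unfolding card_2_iff by blast
  moreover have "0 \<in> X" using assms(1) F2.subspace_0 by blast
  ultimately show ?thesis using that by auto
qed



lemma count7:
  fixes T :: "'a::zero set" and F :: "'a set set"
  assumes "finite T" "card (T - {0}) = 7"
    and F: "\<And>X. X \<in> F \<Longrightarrow> X \<subseteq> T \<and> 0 \<in> X \<and> card X = 4"
    and D: "\<And>X Y u v. X \<in> F \<Longrightarrow> Y \<in> F \<Longrightarrow> X \<noteq> Y \<Longrightarrow> u \<noteq> v \<Longrightarrow> u \<in> X \<inter> Y \<Longrightarrow> v \<in> X \<inter> Y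
           \<Longrightarrow> u \<noteq> 0 \<Longrightarrow> v \<noteq> 0 \<Longrightarrow> False"
  shows "card F \<le> 7"
proof -
  define A where "A X = {S. S \<subseteq> X - {0} \<and> card S = 2}" for X :: "'a set"
  have "F \<subseteq> Pow T" using F by blast
  then have finF: "finite F" using assms(1) finite_subset by blast
  have cA: "card (A X) = 3" if "X \<in> F" for X
  proof -
    have "finite X" "0 \<in> X" "card X = 4" using F[OF that] assms(1) finite_subset by blast+
    then have "card (X - {0}) = 3" by simp
    then show ?thesis unfolding A_def using n_subsets[of "X - {0}" 2] \<open>finite X\<close> by (simp add: numeral_eq_Suc)
  qed
  have finA: "finite (A X)" if "X \<in> F" for X by (rule card_ge_0_finite) (simp add: cA[OF that])
  have disj: "A X \<inter> A Y = {}" if "X \<in> F" "Y \<in> F" "X \<noteq> Y" for X Y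
  proof (rule ccontr)
    assume "A X \<inter> A Y \<noteq> {}"
    then obtain S where S: "S \<subseteq> X - {0}" "S \<subseteq> Y - {0}" "card S = 2" unfolding A_def by auto
    then obtain u v where "u \<noteq> v" "S = {u, v}" unfolding card_2_iff by blast
    then show False using D[OF that, of u v] S by auto
  qed
  have "card (\<Union>X\<in>F. A X) = (\<Sum>X\<in>F. card (A X))"
    by (rule card_UN_disjoint) (use finF finA disj in auto)
  also have "\<dots> = 3 * card F" using cA by simp
  finally have e: "card (\<Union>X\<in>F. A X) = 3 * card F" .
  have "(\<Union>X\<in>F. A X) \<subseteq> {S. S \<subseteq> T - {0} \<and> card S = 2}" unfolding A_def using F by blast
  moreover have "card {S. S \<subseteq> T - {0} \<and> card S = 2} = 21"
    using n_subsets[of "T - {0}" 2] assms(1,2) by (simp add: numeral_eq_Suc)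
  moreover have "finite {S. S \<subseteq> T - {0} \<and> card S = 2}" using assms(1) by auto
  ultimately have "3 * card F \<le> 21" using e card_mono[of "{S. S \<subseteq> T - {0} \<and> card S = 2}" "\<Union>X\<in>F. A X"] by simp
  then show ?thesis by simp
qed




theorem proposition2:
  fixes n :: nat and U :: "(nat \<Rightarrow> bit) set set"
  assumes "n \<ge> 4"
    and "linear_code n U"
    and "equidistant U 2"
    and "card U = 2 ^ (n - 1)"
  shows "sunflower n (U - {{0}}) \<or>
         (n = 4 \<and> (\<exists>T\<in>G2 4 3. U - {{0}} = {Y \<in> G2 4 2. Y \<subset> T}))"
proof -
  from assms(2) have UP: "U \<subseteq> P2 n" and U0: "{0} \<in> U" by (auto simp: linear_code_def)
  have eqd: "\<And>X Y. X \<in> U \<Longrightarrow> Y \<in> U \<Longrightarrow> X \<noteq> Y \<Longrightarrow> dS X Y = 2"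
    using assms(3) unfolding equidistant_def by simp
  have pos: "card U > 0" using assms(4) by simp
  then have finU: "finite U" using card_ge_0_finite by blast
  define L where "L = U - {{0}}"
  have LU: "L \<subseteq> U" unfolding L_def by blast
  have finL: "finite L" using finU LU finite_subset by blast
  have cardL: "card L = 2 ^ (n - 1) - 1" unfolding L_def using assms(4) U0 finU by simp
  have "(2::nat) ^ 3 \<le> 2 ^ (n - 1)" by (rule power_increasing) (use assms(1) in auto)
  then have ge7: "card L \<ge> 7" using cardL by simp
  have sub: "F2.subspace X \<and> finite X \<and> X \<subseteq> F2n n" if "X \<in> U" for X
    using UP that P2_finite[of X n] by (auto simp: P2_def)
  have dim0: "dimF2 {0} = 0"
    by (rule dim_from_card) auto
  have c4: "card X = 4 \<and> dimF2 X = 2" if X: "X \<in> L" for X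
  proof -
    have XU: "X \<in> U" "X \<noteq> {0}" using X LU unfolding L_def by auto
    have "0 \<in> X" using sub[OF XU(1)] F2.subspace_0 by blast
    then have "X \<inter> {0} = {0}" by blast
    moreover have "dS X {0} = 2" using eqd XU U0 by blast
    ultimately have "dimF2 X + dimF2 {0} - 2 * dimF2 {0} = 2" unfolding dS_def by metis
    then have "dimF2 X = 2" unfolding dim0 by linarith
    moreover have "card X = 2 ^ dimF2 X" using sub[OF XU(1)] card_subspace by blast
    ultimately show ?thesis by simp
  qed
  have c2: "card (X \<inter> Y) = 2" if "X \<in> L" "Y \<in> L" "X \<noteq> Y" for X Y
  proof -
    have "dS X Y = 2" using eqd that LU by blast
    then have "dimF2 X + dimF2 Y - 2 * dimF2 (X \<inter> Y) = 2" unfolding dS_def .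
    then have "dimF2 (X \<inter> Y) = 1" using c4[OF that(1)] c4[OF that(2)] by linarith
    moreover have "F2.subspace (X \<inter> Y)" "finite (X \<inter> Y)"
      using sub that LU F2.subspace_inter by blast+
    ultimately show ?thesis using card_subspace by fastforce
  qed
  have meet: "\<exists>x. x \<noteq> 0 \<and> x \<in> X \<and> x \<in> Y" if XYL: "X \<in> L" "Y \<in> L" for X Y
  proof (cases "X = Y")
    case True
    have "card X = 4" using c4 that by blast
    have "\<not> X \<subseteq> {0}"
    proof
      assume "X \<subseteq> {0}"
      then have "card X \<le> card {0::nat\<Rightarrow>bit}" by (rule card_mono[rotated]) simp
      then show False using \<open>card X = 4\<close> by simp
    qed
    then show ?thesis using True by blast
  next
    case False
    have "F2.subspace (X \<inter> Y)" "finite (X \<inter> Y)"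
      using sub that LU F2.subspace_inter by blast+
    then obtain p where "p \<noteq> 0" "X \<inter> Y = {0, p}" using point_eq c2[OF XYL False] by blast
    then show ?thesis by blast
  qed
  have X0: "0 \<in> X" if "X \<in> L" for X using sub that LU F2.subspace_0 by blast
  show ?thesis
  proof (cases "\<exists>p. p \<noteq> 0 \<and> (\<forall>X\<in>L. p \<in> X)")
    case True
    then obtain p where p: "p \<noteq> 0" "\<And>X. X \<in> L \<Longrightarrow> p \<in> X" by blast
    obtain X0 where "X0 \<in> L" using ge7 by fastforce
    define C where "C = {0, p}"
    have Csub: "F2.subspace C"
    proof (rule F2.subspaceI)
      show "0 \<in> C" unfolding C_def by simp
      show "x + y \<in> C" if "x \<in> C" "y \<in> C" for x y using that unfolding C_def by auto
      show "scaleF2 c x \<in> C" if "x \<in> C" for c x using that scale_cases[of c x] unfolding C_def by auto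
    qed
    have "C \<subseteq> F2n n" unfolding C_def using p(2)[OF \<open>X0 \<in> L\<close>] X0[OF \<open>X0 \<in> L\<close>] sub[of X0] \<open>X0 \<in> L\<close> LU by blast
    moreover have "card C = 2" unfolding C_def using p by simp
    moreover have "finite C" unfolding C_def by simp
    ultimately have CG: "C \<in> G2 n 1" using Csub dim_from_card[of C 1] by (simp add: G2_def P2_def)
    have XYC: "X \<inter> Y = C" if "X \<in> L" "Y \<in> L" "X \<noteq> Y" for X Y
    proof -
      have "C \<subseteq> X \<inter> Y" unfolding C_def using p that X0 by blast
      moreover have "finite (X \<inter> Y)" using sub that LU by blast
      ultimately show ?thesis using card_subset_eq c2[OF that] \<open>card C = 2\<close> by metis
    qed
    have LG: "L \<subseteq> G2 n 2" using c4 UP LU by (auto simp: G2_def)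
    have "sunflower n L" unfolding sunflower_def
    proof (intro conjI)
      show "\<exists>k. L \<subseteq> G2 n k" using LG by (rule exI)
      show "\<exists>t. \<exists>C\<in>G2 n t. \<forall>X\<in>L. \<forall>Y\<in>L. X \<noteq> Y \<longrightarrow> X \<inter> Y = C"
        using CG XYC by (intro exI bexI[of _ C]) auto
    qed
    then show ?thesis unfolding L_def by blast
  next
    case False
    obtain L1 where L1: "L1 \<in> L" using ge7 by fastforce
    have "card (L - {L1}) \<ge> 6" using ge7 L1 finL by simp
    then have "L - {L1} \<noteq> {}" by (metis card.empty not_numeral_le_zero)
    then obtain L2 where L2: "L2 \<in> L" "L2 \<noteq> L1" by blast
    have "F2.subspace (L1 \<inter> L2)" "finite (L1 \<inter> L2)"
      using sub L1 L2 LU F2.subspace_inter by blast+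
    then obtain p where p: "p \<noteq> 0" "L1 \<inter> L2 = {0, p}" using point_eq c2[OF L1 L2(1)] L2(2) by metis
    obtain L3 where L3: "L3 \<in> L" "p \<notin> L3" using False p by blast
    have "L3 \<noteq> L1" "L3 \<noteq> L2" using p L3 by auto
    have "F2.subspace (L1 \<inter> L3)" "finite (L1 \<inter> L3)"
      using sub L1 L3 LU F2.subspace_inter by blast+
    then obtain q where q: "q \<noteq> 0" "L1 \<inter> L3 = {0, q}" using point_eq c2[OF L1 L3(1)] \<open>L3 \<noteq> L1\<close> by metis
    have "F2.subspace (L2 \<inter> L3)" "finite (L2 \<inter> L3)"
      using sub L2 L3 LU F2.subspace_inter by blast+
    then obtain r where r: "r \<noteq> 0" "L2 \<inter> L3 = {0, r}" using point_eq c2[OF L2(1) L3(1)] \<open>L3 \<noteq> L2\<close> by metis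
    have "q \<noteq> p" "r \<noteq> p" using q r L3 by auto
    have "r \<notin> L1"
    proof
      assume "r \<in> L1"
      then have "r \<in> L1 \<inter> L2" using r by blast
      then show False using p r \<open>r \<noteq> p\<close> by auto
    qed
    have subL1: "F2.subspace L1" "finite L1" "L1 \<subseteq> F2n n" using sub L1 LU by blast+
    have spanL1: "F2.span L1 = L1" using subL1 F2.span_eq_iff by blast
    define T where "T = F2.span (insert r L1)"
    have cT: "card T = 8" unfolding T_def
      using card_span_insert[of L1 r] spanL1 subL1 \<open>r \<notin> L1\<close> c4[OF L1] by simp
    have "r \<in> F2n n" using r sub L2 LU by blast
    then have TF: "T \<subseteq> F2n n" unfolding T_def using subL1 F2.span_minimal F2n_subspace by blast
    then have finT: "finite T" using F2n_finite finite_subset by blast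
    have subT: "F2.subspace T" unfolding T_def by simp
    have L1T: "L1 \<subseteq> T" "r \<in> T" unfolding T_def using F2.span_superset by blast+
    have inT: "X \<subseteq> T" if "F2.subspace X" "finite X" "card X = 4" "u \<in> X" "v \<in> X" "u \<noteq> v"
        "u \<noteq> 0" "v \<noteq> 0" "u \<in> T" "v \<in> T" for X u v
    proof -
      have "X = {0, u, v, u + v}" using line_eq that by blast
      then show ?thesis using that(9,10) subT F2.subspace_0 F2.subspace_add by blast
    qed
    have subX: "F2.subspace X" "finite X" "card X = 4" if "X \<in> L" for X
      using sub that LU c4 by blast+
    have pT: "p \<in> T" "p \<in> L2" using p L1T by blast+
    have rL2: "r \<in> L2" using r by blast
    have L2T: "L2 \<subseteq> T" by (rule inT[OF subX[OF L2(1)] pT(2) rL2 \<open>r \<noteq> p\<close>[symmetric] p(1) r(1) pT(1) L1T(2)])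
    have "q \<noteq> r"
    proof
      assume "q = r"
      then have "q \<in> L1 \<inter> L2" using q r by blast
      then show False using p q \<open>q \<noteq> p\<close> by auto
    qed
    have qT: "q \<in> T" "q \<in> L3" using q L1T by blast+
    have rT: "r \<in> T" "r \<in> L3" using r L1T by blast+
    have L3T: "L3 \<subseteq> T" by (rule inT[OF subX[OF L3(1)] qT(2) rT(2) \<open>q \<noteq> r\<close> q(1) r(1) qT(1) rT(1)])
    have allT: "X \<subseteq> T" if X: "X \<in> L" for X
    proof -
      obtain x1 where x1: "x1 \<noteq> 0" "x1 \<in> X" "x1 \<in> L1" using meet[OF X L1] by blast
      obtain x2 where x2: "x2 \<noteq> 0" "x2 \<in> X" "x2 \<in> L2" using meet[OF X L2(1)] by blast
      obtain x3 where x3: "x3 \<noteq> 0" "x3 \<in> X" "x3 \<in> L3" using meet[OF X L3(1)] by blast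
      show ?thesis
      proof (cases "x1 = x2")
        case False
        then show ?thesis using inT[OF subX[OF X], of x1 x2] x1 x2 L1T L2T by blast
      next
        case True
        then have "x1 = p" using x1 x2 p by blast
        then have "x1 \<noteq> x3" using x3 L3 by blast
        then show ?thesis using inT[OF subX[OF X], of x1 x3] x1 x3 L1T L3T by blast
      qed
    qed
    have "0 \<in> T" using subT F2.subspace_0 by blast
    then have cT7: "card (T - {0}) = 7" using cT finT by simp
    have "card L \<le> 7"
    proof (rule count7[OF finT cT7])
      show "X \<subseteq> T \<and> 0 \<in> X \<and> card X = 4" if "X \<in> L" for X using allT X0 c4 that by blast
      show False if "X \<in> L" "Y \<in> L" "X \<noteq> Y" "u \<noteq> v" "u \<in> X \<inter> Y" "v \<in> X \<inter> Y" "u \<noteq> 0" "v \<noteq> 0"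
        for X Y u v
      proof -
        have "{0, u, v} \<subseteq> X \<inter> Y" using that X0 by blast
        moreover have "finite (X \<inter> Y)" using subX that by blast
        ultimately have "card {0, u, v} \<le> card (X \<inter> Y)" by (rule card_mono[rotated])
        then show False using c2[OF that(1-3)] that(4,7,8) by simp
      qed
    qed
    then have "card L = 7" using ge7 by simp
    then have "(2::nat) ^ (n - 1) = 2 ^ 3" using cardL by simp
    then have "n - 1 = 3" using power_inject_exp by (metis one_less_numeral_iff semiring_norm(76))
    then have n4: "n = 4" by simp
    have TG: "T \<in> G2 4 3" using subT TF finT cT dim_from_card[of T 3] n4 by (simp add: G2_def P2_def)
    define R where "R = {Y \<in> G2 4 2. Y \<subset> T}"
    have LR: "L \<subseteq> R"
    proof
      fix X assume X: "X \<in> L"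
      have "X \<noteq> T" using c4[OF X] cT by auto
      then show "X \<in> R" unfolding R_def using allT[OF X] c4[OF X] UP LU X n4 by (auto simp: G2_def)
    qed
    have subR: "F2.subspace Y" "finite Y" "card Y = 4" "Y \<subseteq> T" if "Y \<in> R" for Y
    proof -
      show "F2.subspace Y" "Y \<subseteq> T" using that unfolding R_def G2_def P2_def by auto
      then show "finite Y" using finT finite_subset by blast
      then show "card Y = 4" using card_subspace \<open>F2.subspace Y\<close> that unfolding R_def G2_def by auto
    qed
    have "card R \<le> 7"
    proof (rule count7[OF finT cT7])
      show "X \<subseteq> T \<and> 0 \<in> X \<and> card X = 4" if "X \<in> R" for X using subR[OF that] F2.subspace_0 by blast
      show False if "X \<in> R" "Y \<in> R" "X \<noteq> Y" "u \<noteq> v" "u \<in> X \<inter> Y" "v \<in> X \<inter> Y" "u \<noteq> 0" "v \<noteq> 0"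
        for X Y u v
      proof -
        have "X = {0, u, v, u + v}" using line_eq subR[OF that(1)] that by blast
        moreover have "Y = {0, u, v, u + v}" using line_eq subR[OF that(2)] that by blast
        ultimately show False using that(3) by simp
      qed
    qed
    moreover have "R \<subseteq> Pow T" unfolding R_def by auto
    then have "finite R" using finT finite_subset by blast
    ultimately have "L = R" using LR \<open>card L = 7\<close> card_subset_eq by (metis card_mono antisym)
    then show ?thesis using TG n4 unfolding L_def R_def by blast
  qed
qed

end
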